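(* The complex linear span $\mathcal{L}=\{\sum_{l,m=1}^n a^m_l Y^l_m : a^m_l\in\mathbf{C}\}$ is closed under the Lie bracket of vector fields and has dimension $n^2-1$ over $\mathbf{C}$; hence it is an $(n^2-1)$-dimensional Lie algebra.
   Context: Coordinates $x=(x_1,\dots,x_n)\in\mathbf{C}^n$, $n\ge2$, working on the open set $\{u\ne0\}$. Notation: $u=\sum_{j=1}^n x_j$, $D=\sum_{j=1}^n x_j\,\partial/\partial x_j$, and for $l,m\in\{1,\dots,n\}$, $Y^l_m = x_m u^{l-m-1}\big(D-u\,\partial/\partial x_l\big)$. *)

theory Defs
  imports "HOL-Analysis.Analysis" "HOL-Library.Function_Algebras"
begin

text \<open>Points of C^n: functions nat => complex that vanish outside the coordinate
  indices 1..n.  The open set {u ~= 0}.\<close>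
definition Dom :: "nat \<Rightarrow> (nat \<Rightarrow> complex) set" where
  "Dom n = {x. (\<forall>i. i \<notin> {1..n} \<longrightarrow> x i = 0) \<and> (\<Sum>i=1..n. x i) \<noteq> 0}"

text \<open>A (holomorphic) vector field V on Dom n is represented by its coefficient
  functions: V x j is the coefficient of d/dx_j at x, for j in 1..n.  Fields are
  normalised to be 0 outside Dom n and for j outside 1..n.\<close>
type_synonym field = "(nat \<Rightarrow> complex) \<Rightarrow> nat \<Rightarrow> complex"

definition usum :: "nat \<Rightarrow> (nat \<Rightarrow> complex) \<Rightarrow> complex" where
  "usum n x = (\<Sum>i=1..n. x i)"

text \<open>Y^l_m = x_m u^(l-m-1) (D - u d/dx_l); its j-th coefficient is
  x_m u^(l-m-1) (x_j - u [j=l]).\<close>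
definition Yf :: "nat \<Rightarrow> nat \<Rightarrow> nat \<Rightarrow> field" where
  "Yf n l m = (\<lambda>x j. if x \<in> Dom n \<and> j \<in> {1..n}
       then x m * usum n x powi (int l - int m - 1) *
            (x j - (if j = l then usum n x else 0))
       else 0)"

definition pdiff :: "((nat \<Rightarrow> complex) \<Rightarrow> complex) \<Rightarrow> (nat \<Rightarrow> complex) \<Rightarrow> nat \<Rightarrow> complex" where
  "pdiff g x k = deriv (\<lambda>t. g (x(k := x k + t))) 0"

definition lie_bracket :: "nat \<Rightarrow> field \<Rightarrow> field \<Rightarrow> field" where
  "lie_bracket n V W = (\<lambda>x j. if x \<in> Dom n \<and> j \<in> {1..n}
       then (\<Sum>k=1..n. V x k * pdiff (\<lambda>y. W y j) x k - W x k * pdiff (\<lambda>y. V y j) x k)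
       else 0)"

definition Lspan :: "nat \<Rightarrow> field set" where
  "Lspan n = {(\<lambda>x j. \<Sum>l=1..n. \<Sum>m=1..n. a l m * Yf n l m x j) | a :: nat \<Rightarrow> nat \<Rightarrow> complex. True}"

definition fscale :: "complex \<Rightarrow> field \<Rightarrow> field" where
  "fscale c V = (\<lambda>x j. c * V x j)"

end

theory Submission
  imports Defs
begin

definition Yc :: "nat \<Rightarrow> nat \<Rightarrow> nat \<Rightarrow> (nat \<Rightarrow> complex) \<Rightarrow> nat \<Rightarrow> complex" where
  "Yc n l m x j = x m * usum n x powi (int l - int m - 1) * (x j - (if j = l then usum n x else 0))"

definition dYc :: "nat \<Rightarrow> nat \<Rightarrow> nat \<Rightarrow> (nat \<Rightarrow> complex) \<Rightarrow> nat \<Rightarrow> nat \<Rightarrow> complex" where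
  "dYc n l m x j k =
     (if m = k then 1 else 0) * usum n x powi (int l - int m - 1) * (x j - (if j = l then usum n x else 0))
   + x m * (of_int (int l - int m - 1) * usum n x powi (int l - int m - 1 - 1)) * (x j - (if j = l then usum n x else 0))
   + x m * usum n x powi (int l - int m - 1) * ((if j = k then 1 else 0) - (if j = l then 1 else 0))"

lemma usum_upd:
  assumes "k \<in> {1..n}"
  shows "usum n (x(k := x k + t)) = usum n x + t"
proof -
  have "usum n (x(k := x k + t)) = (\<Sum>i=1..n. x i + (if i = k then t else 0))"
    unfolding usum_def by (rule sum.cong) auto
  also have "\<dots> = usum n x + t" using assms by (simp add: sum.distrib usum_def)
  finally show ?thesis .
qed

lemma Dom_upd:
  assumes "x \<in> Dom n" "k \<in> {1..n}" "usum n x + t \<noteq> 0"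
  shows "x(k := x k + t) \<in> Dom n"
  using assms usum_upd[OF assms(2), of x t] unfolding Dom_def usum_def by auto

lemma Yf_Dom: "x \<in> Dom n \<Longrightarrow> j \<in> {1..n} \<Longrightarrow> Yf n l m x j = Yc n l m x j"
  by (simp add: Yf_def Yc_def)

lemma usum_Dom: "x \<in> Dom n \<Longrightarrow> usum n x \<noteq> 0"
  by (simp add: Dom_def usum_def)

lemma Y_deriv:
  assumes x: "x \<in> Dom n" and k: "k \<in> {1..n}" and j: "j \<in> {1..n}"
  shows "((\<lambda>t. Yf n l m (x(k := x k + t)) j) has_field_derivative dYc n l m x j k) (at 0)"
proof -
  define U where "U = usum n x"
  have U0: "U \<noteq> 0" using usum_Dom[OF x] by (simp add: U_def)
  define g where "g t = (x m + (if m = k then t else 0)) * (U + t) powi (int l - int m - 1)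
      * (x j + (if j = k then t else 0) - (if j = l then U + t else 0))" for t
  have h1: "((\<lambda>t. x m + (if m = k then t else 0)) has_field_derivative (if m = k then 1 else 0)) (at 0)"
    by (cases "m = k") (auto intro!: derivative_eq_intros)
  have h2: "((\<lambda>t. (U + t) powi (int l - int m - 1)) has_field_derivative
      of_int (int l - int m - 1) * (U + 0) powi (int l - int m - 1 - 1) * 1) (at 0)"
    by (rule DERIV_power_int) (auto intro!: derivative_eq_intros simp: U0)
  have h3: "((\<lambda>t. x j + (if j = k then t else 0) - (if j = l then U + t else 0)) has_field_derivative
      ((if j = k then 1 else 0) - (if j = l then 1 else 0))) (at 0)"
    by (cases "j = k"; cases "j = l") (auto intro!: derivative_eq_intros)
  have D: "(g has_field_derivative dYc n l m x j k) (at 0)"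
    unfolding g_def
    apply (rule DERIV_cong[OF DERIV_mult[OF DERIV_mult[OF h1 h2] h3]])
    apply (simp add: dYc_def U_def[symmetric] distrib_left distrib_right mult_ac)
    done
  have O: "open (- {- U})"
    by (simp add: open_Compl)
  have E: "\<And>t. t \<in> - {- U} \<Longrightarrow> g t = Yf n l m (x(k := x k + t)) j"
  proof -
    fix t assume "t \<in> - {- U}"
    then have "U + t \<noteq> 0" by (auto simp: add_eq_0_iff)
    then have d: "x(k := x k + t) \<in> Dom n" using Dom_upd[OF x k] by (simp add: U_def)
    show "g t = Yf n l m (x(k := x k + t)) j"
      using Yf_Dom[OF d j] usum_upd[OF k, of x t] by (simp add: Yc_def g_def U_def)
  qed
  have M: "(0::complex) \<in> - {- U}" using U0 by simp
  show ?thesis by (rule has_field_derivative_transform_within_open[OF D O M E])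
qed

lemma sum_apply_fun: "(sum f A) x = sum (\<lambda>i. f i x) A"
  by (induction A rule: infinite_finite_induct) auto

lemma pdiff_lin:
  assumes x: "x \<in> Dom n" and k: "k \<in> {1..n}" and j: "j \<in> {1..n}"
  shows "pdiff (\<lambda>y. \<Sum>l=1..n. \<Sum>m=1..n. b l m * Yf n l m y j) x k
       = (\<Sum>l=1..n. \<Sum>m=1..n. b l m * dYc n l m x j k)"
  unfolding pdiff_def
  by (rule DERIV_imp_deriv) (intro DERIV_sum DERIV_cmult Y_deriv[OF x k j])

lemma sumYc0:
  assumes x: "x \<in> Dom n" and p: "p \<in> {1..n}"
  shows "(\<Sum>k=1..n. Yc n p q x k) = 0"
proof -
  define c where "c = x q * usum n x powi (int p - int q - 1)"
  have "(\<Sum>k=1..n. Yc n p q x k) = (\<Sum>k=1..n. c * (x k - (if k = p then usum n x else 0)))"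
    by (simp add: Yc_def c_def)
  also have "\<dots> = c * (\<Sum>k=1..n. x k - (if k = p then usum n x else 0))"
    by (simp add: sum_distrib_left)
  also have "\<dots> = c * (usum n x - usum n x)"
    using p by (simp add: sum_subtractf usum_def)
  finally show ?thesis by simp
qed

lemma contract_gen:
  fixes f :: "nat \<Rightarrow> complex"
  assumes "finite S" "m \<in> S" "j \<in> S"
  shows "(\<Sum>k\<in>S. f k * ((if m = k then 1 else 0) * A1 * A2 + B + C * ((if j = k then 1 else 0) - D)))
     = f m * (A1 * A2) + sum f S * B + C * f j - C * D * sum f S"
proof -
  have "(\<Sum>k\<in>S. f k * ((if m = k then 1 else 0) * A1 * A2 + B + C * ((if j = k then 1 else 0) - D)))
     = (\<Sum>k\<in>S. (if m = k then f k * (A1 * A2) else 0) + f k * B + (if j = k then C * f k else 0) - C * D * f k)"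
    by (rule sum.cong) (auto simp: algebra_simps)
  also have "\<dots> = f m * (A1 * A2) + sum f S * B + C * f j - C * D * sum f S"
    using assms by (simp add: sum.distrib sum_subtractf sum_distrib_left sum_distrib_right)
  finally show ?thesis .
qed

lemma contract:
  assumes x: "x \<in> Dom n" and p: "p \<in> {1..n}" and m: "m \<in> {1..n}" and j: "j \<in> {1..n}"
  shows "(\<Sum>k=1..n. Yc n p q x k * dYc n l m x j k)
     = Yc n p q x m * usum n x powi (int l - int m - 1) * (x j - (if j = l then usum n x else 0))
       + x m * usum n x powi (int l - int m - 1) * Yc n p q x j"
proof -
  have "(\<Sum>k=1..n. Yc n p q x k * dYc n l m x j k)
     = Yc n p q x m * (usum n x powi (int l - int m - 1) * (x j - (if j = l then usum n x else 0)))
       + sum (Yc n p q x) {1..n} * (x m * (of_int (int l - int m - 1) * usum n x powi (int l - int m - 1 - 1)) * (x j - (if j = l then usum n x else 0)))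
       + x m * usum n x powi (int l - int m - 1) * Yc n p q x j
       - x m * usum n x powi (int l - int m - 1) * (if j = l then 1 else 0) * sum (Yc n p q x) {1..n}"
    unfolding dYc_def by (rule contract_gen) (use m j in auto)
  then show ?thesis using sumYc0[OF x p] by (simp add: mult.assoc)
qed

lemma ring_id:
  fixes xm xq xj U P1 P2 dql djp djl dmp :: complex
  shows "xm*P1*(xq - dql*U)*P2*(xj - djp*U) + xq*P2*(xm*P1*(xj - djl*U))
     - (xq*P2*(xm - dmp*U)*P1*(xj - djl*U) + xm*P1*(xq*P2*(xj - djp*U)))
   = dmp * (xq*(P1*P2*U)*(xj - djl*U)) - dql*(xm*(P1*P2*U)*(xj - djp*U))"
  by (simp add: algebra_simps)

lemma if_delta: "(if c then (a::complex) else 0) = (if c then 1 else 0) * a"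
  by simp

lemma bracket_basis:
  assumes x: "x \<in> Dom n" and l: "l \<in> {1..n}" and m: "m \<in> {1..n}"
    and p: "p \<in> {1..n}" and q: "q \<in> {1..n}" and j: "j \<in> {1..n}"
  shows "(\<Sum>k=1..n. Yc n l m x k * dYc n p q x j k - Yc n p q x k * dYc n l m x j k)
    = (if m = p then Yc n l q x j else 0) - (if q = l then Yc n p m x j else 0)"
proof -
  define U where "U = usum n x"
  have U0: "U \<noteq> 0" using usum_Dom[OF x] by (simp add: U_def)
  define P1 where "P1 = U powi (int l - int m - 1)"
  define P2 where "P2 = U powi (int p - int q - 1)"
  define dql where "dql = (if q = l then 1 else (0::complex))"
  define djp where "djp = (if j = p then 1 else (0::complex))"
  define djl where "djl = (if j = l then 1 else (0::complex))"
  define dmp where "dmp = (if m = p then 1 else (0::complex))"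
  have PP: "U powi ((int l - int m - 1) + (int p - int q - 1) + 1) = P1 * P2 * U"
    unfolding P1_def P2_def by (simp only: power_int_add[OF disjI1[OF U0]] power_int_1_right)
  have L: "(\<Sum>k=1..n. Yc n l m x k * dYc n p q x j k - Yc n p q x k * dYc n l m x j k)
    = (Yc n l m x q * P2 * (x j - djp * U) + x q * P2 * Yc n l m x j)
      - (Yc n p q x m * P1 * (x j - djl * U) + x m * P1 * Yc n p q x j)"
    by (simp only: sum_subtractf contract[OF x l q j] contract[OF x p m j])
      (simp add: U_def[symmetric] P1_def P2_def djp_def djl_def)
  also have "\<dots> = dmp * (x q*(P1*P2*U)*(x j - djl*U)) - dql*(x m*(P1*P2*U)*(x j - djp*U))"
  proof -
    have e1: "(if q = l then U else 0) = dql * U" by (simp add: dql_def)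
    have e2: "(if j = p then U else 0) = djp * U" by (simp add: djp_def)
    have e3: "(if j = l then U else 0) = djl * U" by (simp add: djl_def)
    have e4: "(if m = p then U else 0) = dmp * U" by (simp add: dmp_def)
    show ?thesis
      unfolding Yc_def U_def[symmetric] P1_def[symmetric] P2_def[symmetric] e1 e2 e3 e4
      by (rule ring_id)
  qed
  also have "\<dots> = (if m = p then Yc n l q x j else 0) - (if q = l then Yc n p m x j else 0)"
  proof -
    have 1: "dmp * (x q*(P1*P2*U)*(x j - djl*U)) = (if m = p then Yc n l q x j else 0)"
    proof (cases "m = p")
      case True
      then have "int l - int q - 1 = (int l - int m - 1) + (int p - int q - 1) + 1" by simp
      then show ?thesis using True PP by (simp add: dmp_def Yc_def U_def[symmetric] djl_def)
    qed (simp add: dmp_def)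
    have 2: "dql*(x m*(P1*P2*U)*(x j - djp*U)) = (if q = l then Yc n p m x j else 0)"
    proof (cases "q = l")
      case True
      then have "int p - int m - 1 = (int l - int m - 1) + (int p - int q - 1) + 1" by simp
      then show ?thesis using True PP by (simp add: dql_def Yc_def U_def[symmetric] djp_def)
    qed (simp add: dql_def)
    show ?thesis using 1 2 by simp
  qed
  finally show ?thesis .
qed

lemma prod4:
  fixes f g :: "nat \<Rightarrow> nat \<Rightarrow> complex"
  shows "(\<Sum>l\<in>A. \<Sum>m\<in>A. f l m) * (\<Sum>p\<in>A. \<Sum>q\<in>A. g p q) = (\<Sum>l\<in>A. \<Sum>m\<in>A. \<Sum>p\<in>A. \<Sum>q\<in>A. f l m * g p q)"
  unfolding sum_distrib_right unfolding sum_distrib_left ..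

lemma swap5:
  fixes F :: "nat \<Rightarrow> nat \<Rightarrow> nat \<Rightarrow> nat \<Rightarrow> nat \<Rightarrow> complex"
  shows "(\<Sum>k\<in>K. \<Sum>l\<in>A. \<Sum>m\<in>A. \<Sum>p\<in>A. \<Sum>q\<in>A. F k l m p q) = (\<Sum>l\<in>A. \<Sum>m\<in>A. \<Sum>p\<in>A. \<Sum>q\<in>A. \<Sum>k\<in>K. F k l m p q)"
proof -
  have "(\<Sum>k\<in>K. \<Sum>l\<in>A. \<Sum>m\<in>A. \<Sum>p\<in>A. \<Sum>q\<in>A. F k l m p q) = (\<Sum>l\<in>A. \<Sum>k\<in>K. \<Sum>m\<in>A. \<Sum>p\<in>A. \<Sum>q\<in>A. F k l m p q)"
    by (rule sum.swap)
  also have "\<dots> = (\<Sum>l\<in>A. \<Sum>m\<in>A. \<Sum>k\<in>K. \<Sum>p\<in>A. \<Sum>q\<in>A. F k l m p q)"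
    by (rule sum.cong[OF refl], rule sum.swap)
  also have "\<dots> = (\<Sum>l\<in>A. \<Sum>m\<in>A. \<Sum>p\<in>A. \<Sum>k\<in>K. \<Sum>q\<in>A. F k l m p q)"
    by (rule sum.cong[OF refl], rule sum.cong[OF refl], rule sum.swap)
  also have "\<dots> = (\<Sum>l\<in>A. \<Sum>m\<in>A. \<Sum>p\<in>A. \<Sum>q\<in>A. \<Sum>k\<in>K. F k l m p q)"
    by (rule sum.cong[OF refl], rule sum.cong[OF refl], rule sum.cong[OF refl], rule sum.swap)
  finally show ?thesis .
qed

lemma regroup:
  fixes a b Y :: "nat \<Rightarrow> nat \<Rightarrow> complex"
  assumes A: "finite A"
  shows "(\<Sum>l\<in>A. \<Sum>m\<in>A. \<Sum>p\<in>A. \<Sum>q\<in>A. a l m * b p q * ((if m = p then Y l q else 0) - (if q = l then Y p m else 0)))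
    = (\<Sum>l\<in>A. \<Sum>q\<in>A. (\<Sum>m\<in>A. a l m * b m q - b l m * a m q) * Y l q)"
proof -
  have s1: "(\<Sum>l\<in>A. \<Sum>m\<in>A. \<Sum>p\<in>A. \<Sum>q\<in>A. a l m * b p q * (if m = p then Y l q else 0))
     = (\<Sum>l\<in>A. \<Sum>q\<in>A. (\<Sum>m\<in>A. a l m * b m q) * Y l q)"
  proof -
    have "(\<Sum>l\<in>A. \<Sum>m\<in>A. \<Sum>p\<in>A. \<Sum>q\<in>A. a l m * b p q * (if m = p then Y l q else 0))
       = (\<Sum>l\<in>A. \<Sum>m\<in>A. \<Sum>p\<in>A. (if m = p then (\<Sum>q\<in>A. a l m * b p q * Y l q) else 0))"
      by (intro sum.cong refl) auto
    also have "\<dots> = (\<Sum>l\<in>A. \<Sum>m\<in>A. \<Sum>q\<in>A. a l m * b m q * Y l q)"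
      using A by (simp add: sum.delta)
    also have "\<dots> = (\<Sum>l\<in>A. \<Sum>q\<in>A. \<Sum>m\<in>A. a l m * b m q * Y l q)"
      by (rule sum.cong[OF refl], rule sum.swap)
    also have "\<dots> = (\<Sum>l\<in>A. \<Sum>q\<in>A. (\<Sum>m\<in>A. a l m * b m q) * Y l q)"
      by (simp add: sum_distrib_right)
    finally show ?thesis .
  qed
  have s2: "(\<Sum>l\<in>A. \<Sum>m\<in>A. \<Sum>p\<in>A. \<Sum>q\<in>A. a l m * b p q * (if q = l then Y p m else 0))
     = (\<Sum>l\<in>A. \<Sum>q\<in>A. (\<Sum>m\<in>A. b l m * a m q) * Y l q)"
  proof -
    have "(\<Sum>l\<in>A. \<Sum>m\<in>A. \<Sum>p\<in>A. \<Sum>q\<in>A. a l m * b p q * (if q = l then Y p m else 0))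
       = (\<Sum>l\<in>A. \<Sum>m\<in>A. \<Sum>p\<in>A. \<Sum>q\<in>A. (if l = q then a l m * b p q * Y p m else 0))"
      by (intro sum.cong refl) auto
    also have "\<dots> = (\<Sum>l\<in>A. \<Sum>m\<in>A. \<Sum>p\<in>A. a l m * b p l * Y p m)"
      using A by (simp add: sum.delta)
    also have "\<dots> = (\<Sum>m\<in>A. \<Sum>l\<in>A. \<Sum>p\<in>A. a l m * b p l * Y p m)"
      by (rule sum.swap)
    also have "\<dots> = (\<Sum>m\<in>A. \<Sum>p\<in>A. \<Sum>l\<in>A. a l m * b p l * Y p m)"
      by (rule sum.cong[OF refl], rule sum.swap)
    also have "\<dots> = (\<Sum>p\<in>A. \<Sum>m\<in>A. \<Sum>l\<in>A. a l m * b p l * Y p m)"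
      by (rule sum.swap)
    also have "\<dots> = (\<Sum>p\<in>A. \<Sum>m\<in>A. (\<Sum>l\<in>A. b p l * a l m) * Y p m)"
      by (simp add: sum_distrib_left sum_distrib_right mult_ac)
    finally show ?thesis .
  qed
  have "(\<Sum>l\<in>A. \<Sum>m\<in>A. \<Sum>p\<in>A. \<Sum>q\<in>A. a l m * b p q * ((if m = p then Y l q else 0) - (if q = l then Y p m else 0)))
    = (\<Sum>l\<in>A. \<Sum>m\<in>A. \<Sum>p\<in>A. \<Sum>q\<in>A. a l m * b p q * (if m = p then Y l q else 0))
      - (\<Sum>l\<in>A. \<Sum>m\<in>A. \<Sum>p\<in>A. \<Sum>q\<in>A. a l m * b p q * (if q = l then Y p m else 0))"
    by (simp add: sum_subtractf right_diff_distrib)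
  also have "\<dots> = (\<Sum>l\<in>A. \<Sum>q\<in>A. (\<Sum>m\<in>A. a l m * b m q - b l m * a m q) * Y l q)"
    unfolding s1 s2 by (simp add: sum_subtractf left_diff_distrib)
  finally show ?thesis .
qed

definition LV :: "nat \<Rightarrow> (nat \<Rightarrow> nat \<Rightarrow> complex) \<Rightarrow> field" where
  "LV n a = (\<lambda>x j. \<Sum>l=1..n. \<Sum>m=1..n. a l m * Yf n l m x j)"

lemma Lspan_LV: "Lspan n = range (LV n)"
  unfolding Lspan_def LV_def by auto

lemma Yf_out: "\<not> (x \<in> Dom n \<and> j \<in> {1..n}) \<Longrightarrow> Yf n l m x j = 0"
  by (auto simp: Yf_def)

lemma bracket_LV:
  "lie_bracket n (LV n a) (LV n b) = LV n (\<lambda>l q. \<Sum>m=1..n. a l m * b m q - b l m * a m q)"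
proof (intro ext)
  fix x j
  show "lie_bracket n (LV n a) (LV n b) x j = LV n (\<lambda>l q. \<Sum>m=1..n. a l m * b m q - b l m * a m q) x j"
  proof (cases "x \<in> Dom n \<and> j \<in> {1..n}")
    case False
    then show ?thesis unfolding lie_bracket_def LV_def if_not_P[OF False] Yf_out[OF False] by simp
  next
    case True
    then have x: "x \<in> Dom n" and j: "j \<in> {1..n}" by auto
    let ?I = "{1..n}"
    define F where "F k l m p q = a l m * b p q * (Yc n l m x k * dYc n p q x j k - Yc n p q x k * dYc n l m x j k)" for k l m p q
    have step: "LV n a x k * pdiff (\<lambda>y. LV n b y j) x k - LV n b x k * pdiff (\<lambda>y. LV n a y j) x k
       = (\<Sum>l\<in>?I. \<Sum>m\<in>?I. \<Sum>p\<in>?I. \<Sum>q\<in>?I. F k l m p q)" if k: "k \<in> ?I" for k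
    proof -
      have pa: "pdiff (\<lambda>y. LV n a y j) x k = (\<Sum>l\<in>?I. \<Sum>m\<in>?I. a l m * dYc n l m x j k)"
        unfolding LV_def using pdiff_lin[OF x k j] by simp
      have pb: "pdiff (\<lambda>y. LV n b y j) x k = (\<Sum>l\<in>?I. \<Sum>m\<in>?I. b l m * dYc n l m x j k)"
        unfolding LV_def using pdiff_lin[OF x k j] by simp
      have va: "LV n a x k = (\<Sum>l\<in>?I. \<Sum>m\<in>?I. a l m * Yc n l m x k)"
        unfolding LV_def using Yf_Dom[OF x k] by simp
      have vb: "LV n b x k = (\<Sum>l\<in>?I. \<Sum>m\<in>?I. b l m * Yc n l m x k)"
        unfolding LV_def using Yf_Dom[OF x k] by simp
      have "LV n a x k * pdiff (\<lambda>y. LV n b y j) x k - LV n b x k * pdiff (\<lambda>y. LV n a y j) x k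
        = (\<Sum>l\<in>?I. \<Sum>m\<in>?I. a l m * Yc n l m x k) * (\<Sum>p\<in>?I. \<Sum>q\<in>?I. b p q * dYc n p q x j k)
          - (\<Sum>l\<in>?I. \<Sum>m\<in>?I. a l m * dYc n l m x j k) * (\<Sum>p\<in>?I. \<Sum>q\<in>?I. b p q * Yc n p q x k)"
        unfolding pa pb va vb by (simp add: mult.commute)
      also have "\<dots> = (\<Sum>l\<in>?I. \<Sum>m\<in>?I. \<Sum>p\<in>?I. \<Sum>q\<in>?I. a l m * Yc n l m x k * (b p q * dYc n p q x j k))
          - (\<Sum>l\<in>?I. \<Sum>m\<in>?I. \<Sum>p\<in>?I. \<Sum>q\<in>?I. a l m * dYc n l m x j k * (b p q * Yc n p q x k))"
        unfolding prod4 ..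
      also have "\<dots> = (\<Sum>l\<in>?I. \<Sum>m\<in>?I. \<Sum>p\<in>?I. \<Sum>q\<in>?I. F k l m p q)"
        unfolding F_def by (simp add: sum_subtractf right_diff_distrib mult_ac)
      finally show ?thesis .
    qed
    have "lie_bracket n (LV n a) (LV n b) x j = (\<Sum>k\<in>?I. \<Sum>l\<in>?I. \<Sum>m\<in>?I. \<Sum>p\<in>?I. \<Sum>q\<in>?I. F k l m p q)"
      unfolding lie_bracket_def using True step by simp
    also have "\<dots> = (\<Sum>l\<in>?I. \<Sum>m\<in>?I. \<Sum>p\<in>?I. \<Sum>q\<in>?I. \<Sum>k\<in>?I. F k l m p q)"
      by (rule swap5)
    also have "\<dots> = (\<Sum>l\<in>?I. \<Sum>m\<in>?I. \<Sum>p\<in>?I. \<Sum>q\<in>?I. a l m * b p q *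
        ((if m = p then Yc n l q x j else 0) - (if q = l then Yc n p m x j else 0)))"
      unfolding F_def sum_distrib_left[symmetric]
      by (intro sum.cong refl) (simp only: bracket_basis[OF x _ _ _ _ j])
    also have "\<dots> = (\<Sum>l\<in>?I. \<Sum>q\<in>?I. (\<Sum>m\<in>?I. a l m * b m q - b l m * a m q) * Yc n l q x j)"
      by (rule regroup) simp
    also have "\<dots> = LV n (\<lambda>l q. \<Sum>m=1..n. a l m * b m q - b l m * a m q) x j"
      unfolding LV_def using Yf_Dom[OF x j] by simp
    finally show ?thesis .
  qed
qed

definition ev :: "nat \<Rightarrow> nat \<Rightarrow> complex" where "ev i = (\<lambda>t. if t = i then 1 else 0)"

lemma usum_ev: "i \<in> {1..n} \<Longrightarrow> usum n (ev i) = 1"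
  by (simp add: usum_def ev_def)

lemma ev_Dom: "i \<in> {1..n} \<Longrightarrow> ev i \<in> Dom n"
  using usum_ev[of i n] by (auto simp: Dom_def usum_def ev_def)

definition zv :: "nat \<Rightarrow> nat \<Rightarrow> nat \<Rightarrow> complex" where "zv n i = (\<lambda>t. 2 * ev i t - ev n t)"

lemma usum_zv: "i \<in> {1..n} \<Longrightarrow> usum n (zv n i) = 1"
proof -
  assume i: "i \<in> {1..n}"
  then have n: "n \<in> {1..n}" by auto
  have "usum n (zv n i) = 2 * usum n (ev i) - usum n (ev n)"
    by (simp add: usum_def zv_def sum_subtractf sum_distrib_left)
  then show ?thesis using usum_ev[OF i] usum_ev[OF n] by simp
qed

lemma zv_Dom: "i \<in> {1..n} \<Longrightarrow> zv n i \<in> Dom n"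
  using usum_zv[of i n] by (auto simp: Dom_def usum_def zv_def ev_def)

lemma ev_sum: "k \<in> {1..n} \<Longrightarrow> (\<Sum>m=1..n. f m * ev k m) = f k"
proof -
  assume k: "k \<in> {1..n}"
  have "(\<Sum>m=1..n. f m * ev k m) = (\<Sum>m=1..n. if m = k then f k else 0)"
    by (intro sum.cong) (auto simp: ev_def)
  then show ?thesis using k by simp
qed

lemma eval1:
  assumes x: "x \<in> Dom n" and U: "usum n x = 1" and j: "j \<in> {1..n}"
  shows "LV n a x j = x j * (\<Sum>l=1..n. \<Sum>m=1..n. a l m * x m) - (\<Sum>m=1..n. a j m * x m)"
proof -
  have "LV n a x j = (\<Sum>l=1..n. \<Sum>m=1..n. a l m * x m * x j - (if j = l then a l m * x m else 0))"
    unfolding LV_def Yf_Dom[OF x j] Yc_def U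
    by (intro sum.cong refl) (simp add: algebra_simps)
  also have "\<dots> = (\<Sum>l=1..n. \<Sum>m=1..n. a l m * x m * x j) - (\<Sum>l=1..n. \<Sum>m=1..n. if j = l then a l m * x m else 0)"
    by (simp add: sum_subtractf)
  also have "(\<Sum>l=1..n. \<Sum>m=1..n. if j = l then a l m * x m else 0) = (\<Sum>l=1..n. if j = l then (\<Sum>m=1..n. a l m * x m) else 0)"
    by (intro sum.cong refl) simp
  also have "\<dots> = (\<Sum>m=1..n. a j m * x m)"
    using j by (simp add: sum.delta)
  also have "(\<Sum>l=1..n. \<Sum>m=1..n. a l m * x m * x j) = x j * (\<Sum>l=1..n. \<Sum>m=1..n. a l m * x m)"
    by (simp add: sum_distrib_left mult_ac)
  finally show ?thesis .
qed

lemma coef: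
  assumes n: "n \<ge> 1" and Z: "LV n a = 0"
  shows "\<And>i k. i \<in> {1..n} \<Longrightarrow> k \<in> {1..n} \<Longrightarrow> i \<noteq> k \<Longrightarrow> a i k = 0"
    and "\<And>i. i \<in> {1..n} \<Longrightarrow> a i i = a n n"
proof -
  show off: "a i k = 0" if i: "i \<in> {1..n}" and k: "k \<in> {1..n}" and ik: "i \<noteq> k" for i k
  proof -
    have "LV n a (ev k) i = 0" using Z by simp
    moreover have "LV n a (ev k) i = - a i k"
      using eval1[OF ev_Dom[OF k] usum_ev[OF k] i] ik k by (simp add: ev_def if_distrib cong: if_cong)
    ultimately show ?thesis by simp
  qed
  show "a i i = a n n" if i: "i \<in> {1..n}" for i
  proof (cases "i = n")
    case False
    have nn: "n \<in> {1..n}" using n by auto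
    have col: "(\<Sum>m=1..n. a l m * zv n i m) = 2 * a l i - a l n" for l
    proof -
      have "(\<Sum>m=1..n. a l m * zv n i m) = 2 * (\<Sum>m=1..n. a l m * ev i m) - (\<Sum>m=1..n. a l m * ev n m)"
        by (simp add: zv_def sum_subtractf sum_distrib_left algebra_simps)
      then show ?thesis using ev_sum[OF i] ev_sum[OF nn] by simp
    qed
    have diag: "(\<Sum>l=1..n. a l k) = a k k" if k: "k \<in> {1..n}" for k
    proof -
      have "(\<Sum>l=1..n. a l k) = (\<Sum>l=1..n. if l = k then a k k else 0)"
        using off[OF _ k] by (intro sum.cong refl) auto
      then show ?thesis using k by simp
    qed
    have zi: "zv n i i = 2" using False by (simp add: zv_def ev_def)
    have ss: "(\<Sum>l=1..n. \<Sum>m=1..n. a l m * zv n i m) = 2 * a i i - a n n"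
      unfolding col sum_subtractf sum_distrib_left[symmetric] diag[OF i] diag[OF nn] ..
    have "LV n a (zv n i) i = 0" using Z by simp
    moreover have "LV n a (zv n i) i = 2 * (2 * a i i - a n n) - (2 * a i i - a i n)"
      using eval1[where a=a, OF zv_Dom[OF i] usum_zv[OF i] i] unfolding zi ss unfolding col .
    moreover have "a i n = 0" using off[OF i nn False] .
    ultimately show ?thesis by simp
  qed simp
qed

interpretation fv: vector_space fscale
  by unfold_locales (auto simp: fscale_def fun_eq_iff algebra_simps)

lemma LV_sum: "LV n a = (\<Sum>(l,m)\<in>{1..n}\<times>{1..n}. fscale (a l m) (Yf n l m))"
proof (intro ext)
  fix x j
  have "(\<Sum>(l,m)\<in>{1..n}\<times>{1..n}. fscale (a l m) (Yf n l m)) x j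
      = (\<Sum>(l,m)\<in>{1..n}\<times>{1..n}. a l m * Yf n l m x j)"
    unfolding sum_apply_fun by (intro sum.cong refl) (auto simp: fscale_def)
  also have "\<dots> = LV n a x j"
    unfolding LV_def by (simp add: sum.cartesian_product)
  finally show "LV n a x j = (\<Sum>(l,m)\<in>{1..n}\<times>{1..n}. fscale (a l m) (Yf n l m)) x j" by simp
qed

lemma LV_delta:
  assumes "l \<in> {1..n}" "m \<in> {1..n}"
  shows "LV n (\<lambda>i k. if i = l \<and> k = m then 1 else 0) = Yf n l m"
proof (intro ext)
  fix x j
  have pw: "\<And>i k. (if i = l \<and> k = m then 1 else 0) * Yf n i k x j = (if k = m then (if i = l then Yf n i k x j else 0) else 0)"
    by simp
  show "LV n (\<lambda>i k. if i = l \<and> k = m then 1 else 0) x j = Yf n l m x j"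
    unfolding LV_def pw using assms by (simp add: sum.delta)
qed

lemma LV_diff: "LV n a - LV n b = LV n (\<lambda>i k. a i k - b i k)"
  by (simp add: LV_def fun_eq_iff sum_subtractf left_diff_distrib)

lemma LV_add: "LV n a + LV n b = LV n (\<lambda>i k. a i k + b i k)"
  by (simp add: LV_def fun_eq_iff sum.distrib distrib_right)

lemma LV_scale: "fscale c (LV n a) = LV n (\<lambda>i k. c * a i k)"
  by (simp add: LV_def fscale_def fun_eq_iff sum_distrib_left mult.assoc)

lemma LV_zero: "LV n (\<lambda>i k. 0) = 0"
  by (simp add: LV_def fun_eq_iff)

lemma subspace_Lspan: "fv.subspace (Lspan n)"
  unfolding fv.subspace_def Lspan_LV
proof (intro conjI)
  show "0 \<in> range (LV n)" by (metis LV_zero rangeI)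
qed (auto simp: LV_add LV_scale)

lemma Ysum0: "(\<Sum>l\<in>{1..n}. Yf n l l) = 0"
proof (intro ext)
  fix x j
  show "(\<Sum>l\<in>{1..n}. Yf n l l) x j = 0 x j"
  proof (cases "x \<in> Dom n \<and> j \<in> {1..n}")
    case False
    then show ?thesis unfolding sum_apply_fun using Yf_out[OF False] by simp
  next
    case True
    then have x: "x \<in> Dom n" and j: "j \<in> {1..n}" by auto
    define U where "U = usum n x"
    define P where "P = U powi (-1)"
    have "(\<Sum>l\<in>{1..n}. Yf n l l) x j = (\<Sum>l\<in>{1..n}. x l * P * x j - (if j = l then x l * P * U else 0))"
      unfolding sum_apply_fun Yf_Dom[OF x j] Yc_def U_def[symmetric] P_def
      by (intro sum.cong refl) (simp add: algebra_simps)
    also have "\<dots> = (\<Sum>l\<in>{1..n}. x l) * P * x j - x j * P * U"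
      using j by (simp add: sum_subtractf sum_distrib_right sum.delta)
    also have "\<dots> = 0" by (simp add: U_def usum_def)
    finally show ?thesis by simp
  qed
qed

definition Ix :: "nat \<Rightarrow> (nat \<times> nat) set" where
  "Ix n = {1..n} \<times> {1..n} - {(n, n)}"

definition YB :: "nat \<Rightarrow> field set" where
  "YB n = (\<lambda>(l,m). Yf n l m) ` Ix n"

lemma inj_Y:
  assumes n: "n \<ge> 1"
  shows "inj_on (\<lambda>(l,m). Yf n l m) ({1..n} \<times> {1..n})"
proof (intro inj_onI)
  fix lm pq assume lm: "lm \<in> {1..n} \<times> {1..n}" and pq: "pq \<in> {1..n} \<times> {1..n}"
    and eq: "(\<lambda>(l,m). Yf n l m) lm = (\<lambda>(l,m). Yf n l m) pq"
  obtain l m where lm_def: "lm = (l, m)" by (cases lm)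
  obtain p q where pq_def: "pq = (p, q)" by (cases pq)
  have l: "l \<in> {1..n}" and m: "m \<in> {1..n}" using lm lm_def by auto
  have p: "p \<in> {1..n}" and q: "q \<in> {1..n}" using pq pq_def by auto
  define a where "a i k = (if i = l \<and> k = m then 1 else 0) - (if i = p \<and> k = q then 1 else (0::complex))" for i k
  have "LV n a = Yf n l m - Yf n p q"
    unfolding a_def LV_diff[symmetric] LV_delta[OF l m] LV_delta[OF p q] ..
  also have "\<dots> = 0" using eq lm_def pq_def by simp
  finally have Z: "LV n a = 0" .
  note c1 = coef(1)[OF n Z] and c2 = coef(2)[OF n Z]
  have "l = p \<and> m = q"
  proof (cases "l = m")
    case False
    have "(1::complex) - (if l = p \<and> m = q then 1 else 0) = 0"
      using c1[OF l m False] by (simp add: a_def)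
    then show ?thesis by (cases "l = p \<and> m = q") auto
  next
    case lm_eq: True
    show ?thesis
    proof (cases "p = q")
      case False
      have "(if p = l \<and> q = m then 1 else 0) - (1::complex) = 0"
        using c1[OF p q False] by (simp add: a_def)
      then show ?thesis by (cases "p = l \<and> q = m") auto
    next
      case True
      have "a l l = a p p" using c2[OF l] c2[OF p] by simp
      then have "(1::complex) - (if l = p then 1 else 0) = (if l = p then 1 else 0) - 1"
        using lm_eq True by (simp add: a_def)
      then show ?thesis using lm_eq True by (cases "l = p") auto
    qed
  qed
  then show "lm = pq" using lm_def pq_def by simp
qed

lemma card_Ix: "n \<ge> 1 \<Longrightarrow> card (Ix n) = n^2 - 1"
  unfolding Ix_def by (simp add: card_Diff_singleton power2_eq_square)

lemma card_YB: "n \<ge> 1 \<Longrightarrow> card (YB n) = n^2 - 1"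
proof -
  assume n: "n \<ge> 1"
  have "inj_on (\<lambda>(l,m). Yf n l m) (Ix n)"
    by (rule inj_on_subset[OF inj_Y[OF n]]) (auto simp: Ix_def)
  then show ?thesis unfolding YB_def by (simp add: card_image card_Ix[OF n])
qed

lemma finite_YB: "finite (YB n)"
  unfolding YB_def Ix_def by simp

lemma fscale_0: "fscale 0 V = 0"
  by (simp add: fscale_def fun_eq_iff)

lemma indep_YB:
  assumes n: "n \<ge> 1"
  shows "\<not> fv.dependent (YB n)"
proof
  assume d: "fv.dependent (YB n)"
  have "\<exists>u. (\<exists>v\<in>YB n. u v \<noteq> 0) \<and> (\<Sum>v\<in>YB n. fscale (u v) v) = 0"
    using iffD1[OF fv.dependent_finite[OF finite_YB] d] .
  then obtain u where u: "\<exists>v\<in>YB n. u v \<noteq> 0" and s: "(\<Sum>v\<in>YB n. fscale (u v) v) = 0"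
    by (elim exE conjE)
  have injI: "inj_on (\<lambda>(l,m). Yf n l m) (Ix n)"
    by (rule inj_on_subset[OF inj_Y[OF n]]) (auto simp: Ix_def)
  define a where "a l m = (if (l,m) \<in> Ix n then u (Yf n l m) else 0)" for l m
  have "LV n a = (\<Sum>(l,m)\<in>{1..n}\<times>{1..n}. fscale (a l m) (Yf n l m))" by (rule LV_sum)
  also have "\<dots> = (\<Sum>(l,m)\<in>Ix n. fscale (a l m) (Yf n l m))"
    by (rule sum.mono_neutral_right) (auto simp: Ix_def a_def fscale_0)
  also have "\<dots> = (\<Sum>(l,m)\<in>Ix n. fscale (u (Yf n l m)) (Yf n l m))"
    by (rule sum.cong) (auto simp: a_def)
  also have "\<dots> = (\<Sum>v\<in>YB n. fscale (u v) v)"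
    unfolding YB_def by (subst sum.reindex[OF injI]) (simp add: case_prod_beta o_def)
  also have "\<dots> = 0" by (rule s)
  finally have Z: "LV n a = 0" .
  from u obtain l m where lm: "(l,m) \<in> Ix n" and ne: "u (Yf n l m) \<noteq> 0"
    unfolding YB_def by auto
  have l: "l \<in> {1..n}" and m: "m \<in> {1..n}" using lm by (auto simp: Ix_def)
  have ann: "a n n = 0" by (simp add: a_def Ix_def)
  have "a l m = 0"
  proof (cases "l = m")
    case False
    then show ?thesis using coef(1)[OF n Z l m] by simp
  next
    case True
    then show ?thesis using coef(2)[OF n Z l] ann by simp
  qed
  then show False using ne lm by (simp add: a_def)
qed

lemma Ynn_span:
  assumes n: "n \<ge> 1"
  shows "Yf n n n \<in> fv.span (YB n)"
proof -
  have nn: "n \<in> {1..n}" using n by simp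
  have "0 = (\<Sum>l\<in>{1..n}. Yf n l l)" using Ysum0 by simp
  also have "\<dots> = Yf n n n + (\<Sum>l\<in>{1..n} - {n}. Yf n l l)"
    using nn by (intro sum.remove) auto
  finally have "Yf n n n = - (\<Sum>l\<in>{1..n} - {n}. Yf n l l)"
    by (simp add: eq_neg_iff_add_eq_0)
  moreover have "(\<Sum>l\<in>{1..n} - {n}. Yf n l l) \<in> fv.span (YB n)"
  proof (intro fv.span_sum fv.span_base)
    fix l assume "l \<in> {1..n} - {n}"
    then show "Yf n l l \<in> YB n"
      unfolding YB_def Ix_def by (intro image_eqI[where x="(l,l)"]) auto
  qed
  ultimately show ?thesis using fv.span_neg by metis
qed

lemma Lspan_span:
  assumes n: "n \<ge> 1"
  shows "Lspan n = fv.span (YB n)"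
proof
  show "fv.span (YB n) \<subseteq> Lspan n"
  proof (rule fv.span_minimal[OF _ subspace_Lspan])
    show "YB n \<subseteq> Lspan n"
    proof
      fix V assume "V \<in> YB n"
      then obtain l m where lm: "(l,m) \<in> Ix n" and V: "V = Yf n l m"
        unfolding YB_def by auto
      have l: "l \<in> {1..n}" and m: "m \<in> {1..n}" using lm by (auto simp: Ix_def)
      show "V \<in> Lspan n"
        unfolding Lspan_LV V LV_delta[OF l m, symmetric] by (rule rangeI)
    qed
  qed
  show "Lspan n \<subseteq> fv.span (YB n)"
  proof
    fix V assume "V \<in> Lspan n"
    then obtain a where V: "V = LV n a" unfolding Lspan_LV by blast
    have "Yf n l m \<in> fv.span (YB n)" if "(l,m) \<in> {1..n} \<times> {1..n}" for l m
    proof (cases "(l,m) = (n,n)")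
      case True
      then show ?thesis using Ynn_span[OF n] by simp
    next
      case False
      then show ?thesis using that unfolding YB_def Ix_def
        by (intro fv.span_base image_eqI[where x="(l,m)"]) auto
    qed
    then show "V \<in> fv.span (YB n)"
      unfolding V LV_sum by (intro fv.span_sum) (auto intro: fv.span_scale)
  qed
qed

theorem theorem2:
  fixes n :: nat
  assumes "n \<ge> 2"
  shows "(\<forall>V\<in>Lspan n. \<forall>W\<in>Lspan n. lie_bracket n V W \<in> Lspan n)
         \<and> vector_space.dim fscale (Lspan n) = n^2 - 1"
proof
  show "\<forall>V\<in>Lspan n. \<forall>W\<in>Lspan n. lie_bracket n V W \<in> Lspan n"
    unfolding Lspan_LV by (auto simp: bracket_LV)
  have n: "n \<ge> 1" using assms by simp
  have "fv.dim (Lspan n) = fv.dim (fv.span (YB n))" by (simp add: Lspan_span[OF n])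
  also have "\<dots> = card (YB n)" by (rule fv.dim_span_eq_card_independent[OF indep_YB[OF n]])
  also have "\<dots> = n^2 - 1" by (rule card_YB[OF n])
  finally show "vector_space.dim fscale (Lspan n) = n^2 - 1" .
qed

end
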